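(* Let $\mathcal{B}$ be a Boolean control network with state set $\mathcal{S}$. For any two nonempty sets of states $\mathsf{S}^1,\mathsf{S}^2\subseteq\mathcal{S}$, if $\mathsf{S}^1\subseteq\mathsf{S}^2$ and $\Gamma(\mathsf{S}^2)\ne\infty$, then $\Gamma(\mathsf{S}^1)\ne\infty$.
   Context: $\mathbb{B}=\{0,1\}$. A BCN has inputs $\mathcal{I}=\mathbb{B}^\ell$, states $\mathcal{S}=\mathbb{B}^m$, outputs $\mathcal{O}=\mathbb{B}^n$ and updating rules $\sigma:\mathcal{I}\times\mathcal{S}\to\mathcal{S}$, $\rho:\mathcal{S}\to\mathcal{O}$, with $\mathsf{s}(t+1)=\sigma(\mathsf{i}(t),\mathsf{s}(t))$, $\mathsf{o}(t)=\rho(\mathsf{s}(t))$. With $\varepsilon$ denoting empty input/output, let $\xi(\mathsf{i},\mathsf{s})=\sigma(\mathsf{i},\mathsf{s})$ for $\mathsf{i}\ne\varepsilon$, $\xi(\varepsilon,\mathsf{s})=\mathsf{s}$; for $\mathsf{S}\subseteq\mathcal{S}$, $\zeta(\mathsf{S},\mathsf{i},\mathsf{o})=\{\xi(\mathsf{i},\mathsf{s}):\mathsf{s}\in\mathsf{S},\rho(\xi(\mathsf{i},\mathsf{s}))=\mathsf{o}\}$ if $\mathsf{o}\ne\varepsilon$ and $\zeta(\mathsf{S},\mathsf{i},\varepsilon)=\{\xi(\mathsf{i},\mathsf{s}):\mathsf{s}\in\mathsf{S}\}$. For nonempty $\mathsf{S}$: $P_0(\mathsf{S})$ iff $|\mathsf{S}|=1$;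 $P_{n+1}(\mathsf{S})$ iff $|\mathsf{S}|=1$ or there is $\mathsf{i}\in\mathcal{I}$ with $|\zeta(\mathsf{S},\mathsf{i},\varepsilon)|=|\mathsf{S}|$ such that every nonempty $\zeta(\mathsf{S},\mathsf{i},\mathsf{o})$, $\mathsf{o}\in\mathcal{O}$, satisfies $P_n$. $\Gamma(\mathsf{S})\in\mathbb{N}\cup\{\infty\}$ is the least $n$ with $P_n(\mathsf{S})$, or $\infty$ if none (i.e. $\Gamma(\mathsf{S})=0$ if $|\mathsf{S}|=1$, and otherwise $\Gamma(\mathsf{S})=1+\min_{\mathsf{i}}\max_{\mathsf{o}}\Gamma(\zeta(\mathsf{S},\mathsf{i},\mathsf{o}))$ over inputs with $|\zeta(\mathsf{S},\mathsf{i},\varepsilon)|=|\mathsf{S}|$ and outputs with $\zeta(\mathsf{S},\mathsf{i},\mathsf{o})\ne\emptyset$). *)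

theory Defs
  imports Main "HOL-Library.Extended_Nat"
begin

text \<open>Boolean vectors of length k are bool lists of length k. The empty
input/output epsilon is modelled by None, a genuine input/output i by Some i.\<close>

definition bvecs :: "nat \<Rightarrow> bool list set" where
  "bvecs k = {v. length v = k}"

definition bcn :: "nat \<Rightarrow> nat \<Rightarrow> nat \<Rightarrow> (bool list \<Rightarrow> bool list \<Rightarrow> bool list)
   \<Rightarrow> (bool list \<Rightarrow> bool list) \<Rightarrow> bool" where
  "bcn l m n \<sigma> \<rho> \<longleftrightarrow>
     (\<forall>i\<in>bvecs l. \<forall>s\<in>bvecs m. \<sigma> i s \<in> bvecs m) \<and> (\<forall>s\<in>bvecs m. \<rho> s \<in> bvecs n)"

definition xi :: "(bool list \<Rightarrow> bool list \<Rightarrow> bool list) \<Rightarrow> bool list option \<Rightarrow> bool list \<Rightarrow> bool list" where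
  "xi \<sigma> i s = (case i of None \<Rightarrow> s | Some j \<Rightarrow> \<sigma> j s)"

definition zeta :: "(bool list \<Rightarrow> bool list \<Rightarrow> bool list) \<Rightarrow> (bool list \<Rightarrow> bool list)
   \<Rightarrow> bool list set \<Rightarrow> bool list option \<Rightarrow> bool list option \<Rightarrow> bool list set" where
  "zeta \<sigma> \<rho> S i out = (case out of
      None \<Rightarrow> {xi \<sigma> i s | s. s \<in> S}
    | Some p \<Rightarrow> {xi \<sigma> i s | s. s \<in> S \<and> \<rho> (xi \<sigma> i s) = p})"

fun P :: "nat \<Rightarrow> nat \<Rightarrow> (bool list \<Rightarrow> bool list \<Rightarrow> bool list) \<Rightarrow> (bool list \<Rightarrow> bool list)
   \<Rightarrow> nat \<Rightarrow> bool list set \<Rightarrow> bool" where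
  "P l n \<sigma> \<rho> 0 S = (card S = 1)"
| "P l n \<sigma> \<rho> (Suc k) S = (card S = 1 \<or>
     (\<exists>i\<in>bvecs l. card (zeta \<sigma> \<rho> S (Some i) None) = card S \<and>
        (\<forall>p\<in>bvecs n. zeta \<sigma> \<rho> S (Some i) (Some p) \<noteq> {} \<longrightarrow>
           P l n \<sigma> \<rho> k (zeta \<sigma> \<rho> S (Some i) (Some p)))))"

definition Gamma :: "nat \<Rightarrow> nat \<Rightarrow> (bool list \<Rightarrow> bool list \<Rightarrow> bool list) \<Rightarrow> (bool list \<Rightarrow> bool list)
   \<Rightarrow> bool list set \<Rightarrow> enat" where
  "Gamma l n \<sigma> \<rho> S = (if \<exists>k. P l n \<sigma> \<rho> k S then enat (LEAST k. P l n \<sigma> \<rho> k S) else \<infinity>)"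

end

theory Submission
  imports Defs
begin

lemma zeta_None: "zeta \<sigma> \<rho> S (Some i) None = \<sigma> i ` S"
  by (auto simp: zeta_def xi_def)

lemma zeta_Some: "zeta \<sigma> \<rho> S (Some i) (Some p) = {x \<in> \<sigma> i ` S. \<rho> x = p}"
  by (auto simp: zeta_def xi_def)

lemma card1_sub: "finite B \<Longrightarrow> card B = 1 \<Longrightarrow> A \<subseteq> B \<Longrightarrow> A \<noteq> {} \<Longrightarrow> card A = 1"
  by (metis card_1_singletonE subset_singletonD)

lemma P_mono: "finite S2 \<Longrightarrow> S1 \<subseteq> S2 \<Longrightarrow> S1 \<noteq> {} \<Longrightarrow> P l n \<sigma> \<rho> k S2 \<Longrightarrow> P l n \<sigma> \<rho> k S1"
proof (induction k arbitrary: S1 S2)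
  case 0
  then show ?case using card1_sub by auto
next
  case (Suc k)
  show ?case
  proof (cases "card S2 = 1")
    case True
    then show ?thesis using Suc.prems card1_sub by auto
  next
    case False
    then obtain i where i: "i \<in> bvecs l" "card (\<sigma> i ` S2) = card S2"
      and H: "\<forall>p\<in>bvecs n. zeta \<sigma> \<rho> S2 (Some i) (Some p) \<noteq> {} \<longrightarrow>
           P l n \<sigma> \<rho> k (zeta \<sigma> \<rho> S2 (Some i) (Some p))"
      using Suc.prems by (auto simp: zeta_None)
    have "inj_on (\<sigma> i) S2" using i(2) Suc.prems(1) by (simp add: inj_on_iff_eq_card)
    then have inj1: "inj_on (\<sigma> i) S1" using Suc.prems(2) inj_on_subset by blast
    have fin1: "finite S1" using Suc.prems(1,2) finite_subset by blast
    have c1: "card (\<sigma> i ` S1) = card S1" using inj1 by (simp add: card_image)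
    have "\<forall>p\<in>bvecs n. zeta \<sigma> \<rho> S1 (Some i) (Some p) \<noteq> {} \<longrightarrow>
           P l n \<sigma> \<rho> k (zeta \<sigma> \<rho> S1 (Some i) (Some p))"
    proof (intro ballI impI)
      fix p assume p: "p \<in> bvecs n" "zeta \<sigma> \<rho> S1 (Some i) (Some p) \<noteq> {}"
      have sub: "zeta \<sigma> \<rho> S1 (Some i) (Some p) \<subseteq> zeta \<sigma> \<rho> S2 (Some i) (Some p)"
        using Suc.prems(2) by (auto simp: zeta_Some)
      have ne: "zeta \<sigma> \<rho> S2 (Some i) (Some p) \<noteq> {}" using sub p(2) by blast
      have fin: "finite (zeta \<sigma> \<rho> S2 (Some i) (Some p))"
        using Suc.prems(1) by (simp add: zeta_Some)
      show "P l n \<sigma> \<rho> k (zeta \<sigma> \<rho> S1 (Some i) (Some p))"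
        using Suc.IH[OF fin sub p(2)] H p(1) ne by blast
    qed
    then show ?thesis using i(1) c1 by (auto simp: zeta_None)
  qed
qed

theorem lemma4:
  fixes l m n :: nat
    and \<sigma> :: "bool list \<Rightarrow> bool list \<Rightarrow> bool list"
    and \<rho> :: "bool list \<Rightarrow> bool list"
    and S1 S2 :: "bool list set"
  assumes "bcn l m n \<sigma> \<rho>"
    and "S1 \<noteq> {}" and "S2 \<noteq> {}"
    and "S1 \<subseteq> bvecs m" and "S2 \<subseteq> bvecs m"
    and "S1 \<subseteq> S2"
    and "Gamma l n \<sigma> \<rho> S2 \<noteq> \<infinity>"
  shows "Gamma l n \<sigma> \<rho> S1 \<noteq> \<infinity>"
proof -
  have "finite (bvecs m)"
  proof -
    have "bvecs m = {xs. set xs \<subseteq> (UNIV::bool set) \<and> length xs = m}" by (auto simp: bvecs_def)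
    then show ?thesis using finite_lists_length_eq[of "UNIV::bool set" m] by simp
  qed
  then have fin: "finite S2" using assms(5) finite_subset by blast
  obtain k where "P l n \<sigma> \<rho> k S2" using assms(7) by (auto simp: Gamma_def split: if_splits)
  then have "P l n \<sigma> \<rho> k S1" using P_mono[OF fin assms(6) assms(2)] by blast
  then show ?thesis by (auto simp: Gamma_def)
qed

end
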